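(* Let $\Gamma$ be a locally finite vertex-transitive weighted graph with distinguished vertex $e$. If vertices $x,y$ satisfy $\mathbb{P}_e[T_x<\infty]>\mathbb{P}_e[T_y<\infty]$, then they also satisfy $\mathbb{P}_e[\,T_x<T_y\mid\min\{T_x,T_y\}<\infty\,]>1/2$. If the random walk on $\Gamma$ is transient then these two conditions are equivalent.
   Context: Weighted graph: undirected, no loops or multiple edges, weights $\omega_{xy}=\omega_{yx}>0$, $\deg x=\sum_{y\sim x}\omega_{xy}$; vertex-transitive means the group of weight-preserving automorphisms acts transitively on vertices. $(X_t)$ is the random walk stepping from $z$ to neighbour $w$ with probability $\omega_{zw}/\deg z$; $\mathbb{P}_g$ denotes its law with $X_0=g$; $T_z=\inf\{t\ge0:X_t=z\}$. The walk is transient if the probability of ever returning (at a time $t\ge1$) to the starting vertex is less than $1$. *)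

theory Defs
  imports "HOL-Analysis.Analysis"
begin

text \<open>A weighted graph on vertex type 'a is given by a weight function w.
  Edges are the pairs with positive weight.\<close>

definition weighted_graph :: "('a \<Rightarrow> 'a \<Rightarrow> real) \<Rightarrow> bool" where
  "weighted_graph w \<longleftrightarrow> (\<forall>x y. w x y = w y x) \<and> (\<forall>x y. 0 \<le> w x y) \<and> (\<forall>x. w x x = 0)"

definition locally_finite :: "('a \<Rightarrow> 'a \<Rightarrow> real) \<Rightarrow> bool" where
  "locally_finite w \<longleftrightarrow> (\<forall>x. finite {y. 0 < w x y})"

definition vertex_transitive :: "('a \<Rightarrow> 'a \<Rightarrow> real) \<Rightarrow> bool" where
  "vertex_transitive w \<longleftrightarrow>
     (\<forall>u v. \<exists>\<phi>. bij \<phi> \<and> (\<forall>a b. w (\<phi> a) (\<phi> b) = w a b) \<and> \<phi> u = v)"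

definition deg :: "('a \<Rightarrow> 'a \<Rightarrow> real) \<Rightarrow> 'a \<Rightarrow> real" where
  "deg w x = (\<Sum>y | 0 < w x y. w x y)"

text \<open>Probability that the random walk follows a given finite path (list of vertices).\<close>
fun path_prob :: "('a \<Rightarrow> 'a \<Rightarrow> real) \<Rightarrow> 'a list \<Rightarrow> real" where
  "path_prob w (a # b # xs) = w a b / deg w a * path_prob w (b # xs)"
| "path_prob w _ = 1"

text \<open>Paths from e stopped at the first visit (time >= 0) of the set S.\<close>
definition first_passage_paths :: "'a \<Rightarrow> 'a set \<Rightarrow> 'a list set" where
  "first_passage_paths e S =
     {xs. xs \<noteq> [] \<and> hd xs = e \<and> last xs \<in> S \<and> set (butlast xs) \<inter> S = {}}"

text \<open>P_e[T_S < infinity]; in particular P_e[T_x < infinity] = hit_prob w e {x}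
  and P_e[min(T_x,T_y) < infinity] = hit_prob w e {x,y}.\<close>
definition hit_prob :: "('a \<Rightarrow> 'a \<Rightarrow> real) \<Rightarrow> 'a \<Rightarrow> 'a set \<Rightarrow> ennreal" where
  "hit_prob w e S = (\<Sum>\<^sub>\<infinity>xs \<in> first_passage_paths e S. ennreal (path_prob w xs))"

text \<open>P_e[T_x < T_y] (this event is contained in min(T_x,T_y) < infinity).\<close>
definition hit_first :: "('a \<Rightarrow> 'a \<Rightarrow> real) \<Rightarrow> 'a \<Rightarrow> 'a \<Rightarrow> 'a \<Rightarrow> ennreal" where
  "hit_first w e x y =
     (\<Sum>\<^sub>\<infinity>xs \<in> {xs \<in> first_passage_paths e {x, y}. last xs = x \<and> x \<noteq> y}.
        ennreal (path_prob w xs))"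

text \<open>P_e[T_x < T_y | min(T_x,T_y) < infinity].\<close>
definition cond_hit_first :: "('a \<Rightarrow> 'a \<Rightarrow> real) \<Rightarrow> 'a \<Rightarrow> 'a \<Rightarrow> 'a \<Rightarrow> real" where
  "cond_hit_first w e x y = enn2real (hit_first w e x y) / enn2real (hit_prob w e {x, y})"

text \<open>Probability of ever returning to g at some time t >= 1.\<close>
definition return_prob :: "('a \<Rightarrow> 'a \<Rightarrow> real) \<Rightarrow> 'a \<Rightarrow> ennreal" where
  "return_prob w g =
     (\<Sum>\<^sub>\<infinity>xs \<in> {xs. 2 \<le> length xs \<and> hd xs = g \<and> last xs = g \<and> g \<notin> set (tl (butlast xs))}.
        ennreal (path_prob w xs))"

definition transient :: "('a \<Rightarrow> 'a \<Rightarrow> real) \<Rightarrow> 'a \<Rightarrow> bool" where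
  "transient w g \<longleftrightarrow> return_prob w g < 1"

end

theory Submission
  imports Defs
begin


lemma deg_nonneg: "weighted_graph w \<Longrightarrow> 0 \<le> deg w x"
  unfolding deg_def weighted_graph_def by (auto intro: sum_nonneg)

lemma pp_nonneg: assumes "weighted_graph w" shows "0 \<le> path_prob w xs"
proof (induction xs)
  case (Cons a t) then show ?case using assms deg_nonneg[OF assms, of a]
    by (cases t) (auto simp: weighted_graph_def intro!: divide_nonneg_nonneg mult_nonneg_nonneg)
qed auto

lemma pp_glue: "xs \<noteq> [] \<Longrightarrow> ys \<noteq> [] \<Longrightarrow> last xs = hd ys \<Longrightarrow>
   path_prob w (xs @ tl ys) = path_prob w xs * path_prob w ys"
proof (induction xs)
  case (Cons a t) then show ?case by (cases t; cases ys) auto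
qed auto

lemma fin_bound:
  assumes wg: "weighted_graph w" and lf: "locally_finite w"
  shows "finite F \<Longrightarrow> \<forall>xs\<in>F. xs \<noteq> [] \<and> hd xs = u \<Longrightarrow> \<forall>xs\<in>F. \<forall>zs. xs @ zs \<in> F \<longrightarrow> zs = []
     \<Longrightarrow> \<forall>xs\<in>F. length xs \<le> n \<Longrightarrow> sum (path_prob w) F \<le> 1"
proof (induction n arbitrary: u F)
  case 0 then have "F = {}" by auto
  then show ?case by simp
next
  case (Suc n)
  show ?case
  proof (cases "[u] \<in> F")
    case True
    have "F = {[u]}"
    proof safe
      fix xs assume "xs \<in> F"
      then obtain t where "xs = u # t" using Suc.prems(2) by (cases xs) auto
      then show "xs = [u]" using Suc.prems(3) True \<open>xs \<in> F\<close> by fastforce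
    qed (use True in auto)
    then show ?thesis by simp
  next
    case False
    have len2: "\<And>xs. xs \<in> F \<Longrightarrow> xs = u # xs!1 # tl (tl xs)"
    proof -
      fix xs assume "xs \<in> F"
      then obtain t where t: "xs = u # t" using Suc.prems(2) by (cases xs) auto
      then have "t \<noteq> []" using False \<open>xs \<in> F\<close> by auto
      then show "xs = u # xs!1 # tl (tl xs)" using t by (cases t) auto
    qed
    define V where "V = (\<lambda>xs. xs!1) ` F"
    have fV: "finite V" using Suc.prems(1) V_def by auto
    have "sum (path_prob w) F = (\<Sum>v\<in>V. sum (path_prob w) {xs\<in>F. xs!1 = v})"
      using sum.group[OF Suc.prems(1) fV, of "\<lambda>xs. xs!1" "path_prob w"] V_def by auto
    also have "\<dots> \<le> (\<Sum>v\<in>V. w u v / deg w u)"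
    proof (rule sum_mono)
      fix v assume "v \<in> V"
      define S where "S = {xs\<in>F. xs!1 = v}"
      have eq: "\<And>xs. xs \<in> S \<Longrightarrow> path_prob w xs = w u v / deg w u * path_prob w (tl xs)"
      proof -
        fix xs assume "xs \<in> S"
        then have "xs = u # v # tl (tl xs)" using len2 S_def by force
        then show "path_prob w xs = w u v / deg w u * path_prob w (tl xs)"
          by (metis list.sel(3) path_prob.simps(1))
      qed
      have inj: "inj_on tl S"
      proof (rule inj_onI)
        fix a b assume "a \<in> S" "b \<in> S" "tl a = tl b"
        then have "a = u # tl a" "b = u # tl b" using len2 S_def by (metis (no_types, lifting) list.sel(3) mem_Collect_eq)+
        then show "a = b" using \<open>tl a = tl b\<close> by metis
      qed
      have "sum (path_prob w) S = w u v / deg w u * sum (path_prob w \<circ> tl) S"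
        using eq by (simp add: sum_distrib_left)
      also have "sum (path_prob w \<circ> tl) S = sum (path_prob w) (tl ` S)"
        using sum.reindex[OF inj, of "path_prob w"] by (simp add: o_def)
      also have "sum (path_prob w) (tl ` S) \<le> 1"
      proof (rule Suc.IH[of "tl ` S" v])
        show "finite (tl ` S)" using Suc.prems(1) S_def by auto
        show "\<forall>xs\<in>tl ` S. xs \<noteq> [] \<and> hd xs = v"
          using len2 S_def by (auto, metis list.distinct(1) list.sel(3), metis list.sel(1) list.sel(3))
        show "\<forall>xs\<in>tl ` S. \<forall>zs. xs @ zs \<in> tl ` S \<longrightarrow> zs = []"
        proof (intro ballI allI impI)
          fix xs zs assume a: "xs \<in> tl ` S" "xs @ zs \<in> tl ` S"
          then obtain a1 a2 where "a1 \<in> S" "a2 \<in> S" "xs = tl a1" "xs @ zs = tl a2" by auto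
          moreover have "a1 = u # tl a1" "a2 = u # tl a2" using len2 S_def \<open>a1 \<in> S\<close> \<open>a2 \<in> S\<close> by (metis (no_types, lifting) list.sel(3) mem_Collect_eq)+
          ultimately have "a1 = u # xs" "a2 = u # xs @ zs" by metis+
          then show "zs = []" using Suc.prems(3) \<open>a1 \<in> S\<close> \<open>a2 \<in> S\<close> S_def by (metis (no_types, lifting) Cons_eq_appendI mem_Collect_eq)
        qed
        show "\<forall>xs\<in>tl ` S. length xs \<le> n" using Suc.prems(4) S_def by auto
      qed
      then have "w u v / deg w u * sum (path_prob w) (tl ` S) \<le> w u v / deg w u"
        using wg deg_nonneg[OF wg, of u] by (intro mult_left_le) (auto simp: weighted_graph_def)
      finally show "sum (path_prob w) S \<le> w u v / deg w u" .
    qed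
    also have "\<dots> \<le> 1"
    proof -
      have "(\<Sum>v\<in>V. w u v) \<le> deg w u"
      proof -
        have "(\<Sum>v\<in>V. w u v) = (\<Sum>v\<in>V \<inter> {y. 0 < w u y}. w u v)"
          using wg fV by (intro sum.mono_neutral_right) (auto simp: weighted_graph_def, smt (verit))
        also have "\<dots> \<le> (\<Sum>v\<in>{y. 0 < w u y}. w u v)"
          using lf by (intro sum_mono2) (auto simp: locally_finite_def)
        finally show ?thesis by (simp add: deg_def)
      qed
      then show ?thesis using deg_nonneg[OF wg, of u]
        by (cases "deg w u = 0") (auto simp: sum_divide_distrib[symmetric] divide_le_eq_1)
    qed
    finally show ?thesis .
  qed
qed

definition pfree :: "'a \<Rightarrow> 'a list set \<Rightarrow> bool" where
  "pfree u F \<longleftrightarrow> (\<forall>xs\<in>F. xs \<noteq> [] \<and> hd xs = u) \<and> (\<forall>xs\<in>F. \<forall>zs. xs @ zs \<in> F \<longrightarrow> zs = [])"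

lemma pfree_subset: "pfree u F \<Longrightarrow> G \<subseteq> F \<Longrightarrow> pfree u G"
  unfolding pfree_def by (meson subsetD)

lemma pfree_finsum:
  assumes wg: "weighted_graph w" and lf: "locally_finite w" and "pfree u F" "finite G" "G \<subseteq> F"
  shows "sum (path_prob w) G \<le> 1"
proof -
  have p: "pfree u G" by (rule pfree_subset[OF assms(3,5)])
  have m: "\<forall>xs\<in>G. length xs \<le> Max (length ` G)" using assms(4) by simp
  have h1: "\<forall>xs\<in>G. xs \<noteq> [] \<and> hd xs = u" using p unfolding pfree_def by (elim conjE)
  have h2: "\<forall>xs\<in>G. \<forall>zs. xs @ zs \<in> G \<longrightarrow> zs = []" using p unfolding pfree_def by (elim conjE)
  show ?thesis by (rule fin_bound[OF wg lf assms(4) h1 h2 m])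
qed

lemma pfree_summable:
  assumes wg: "weighted_graph w" and lf: "locally_finite w" and "pfree u F"
  shows "path_prob w summable_on F"
proof (rule nonneg_bdd_above_summable_on)
  show "bdd_above (sum (path_prob w) ` {G. G \<subseteq> F \<and> finite G})"
    by (rule bdd_aboveI[of _ 1]) (use pfree_finsum[OF wg lf assms(3)] in blast)
qed (use pp_nonneg[OF wg] in blast)

lemma pfree_le1:
  assumes wg: "weighted_graph w" and lf: "locally_finite w" and "pfree u F"
  shows "infsum (path_prob w) F \<le> 1"
  by (rule infsum_le_finite_sums[OF pfree_summable[OF assms]]) (use pfree_finsum[OF assms] in auto)

lemma pfree_nonneg:
  assumes wg: "weighted_graph w"
  shows "0 \<le> infsum (path_prob w) F"
  using pp_nonneg[OF wg] by (simp add: infsum_nonneg)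

lemma ennreal_infsum:
  assumes wg: "weighted_graph w" and "path_prob w summable_on F"
  shows "(\<Sum>\<^sub>\<infinity>xs\<in>F. ennreal (path_prob w xs)) = ennreal (infsum (path_prob w) F)"
proof -
  have "infsum (ennreal \<circ> path_prob w) F = ennreal (infsum (path_prob w) F)"
  proof (rule infsum_comm_additive_general)
    show "sum (ennreal \<circ> path_prob w) G = ennreal (sum (path_prob w) G)" for G
      using pp_nonneg[OF wg] by (simp add: sum_ennreal)
    show "isCont ennreal (infsum (path_prob w) F)"
      by (simp add: continuous_at_imp_continuous_within isCont_def tendsto_ennrealI)
  qed (rule assms(2))
  then show ?thesis by (simp add: o_def)
qed

definition glue :: "'a list \<times> 'a list \<Rightarrow> 'a list" where
  "glue p = fst p @ tl (snd p)"

lemma glue_sum: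
  assumes wg: "weighted_graph w"
    and A: "\<forall>xs\<in>A. xs \<noteq> [] \<and> last xs = c" and B: "\<forall>ys\<in>B. ys \<noteq> [] \<and> hd ys = c"
    and inj: "inj_on glue (A \<times> B)"
    and sC: "path_prob w summable_on (glue ` (A \<times> B))"
    and sA: "path_prob w summable_on A" and sB: "path_prob w summable_on B"
  shows "infsum (path_prob w) (glue ` (A \<times> B)) = infsum (path_prob w) A * infsum (path_prob w) B"
proof -
  have eq: "\<And>p. p \<in> A \<times> B \<Longrightarrow> (path_prob w \<circ> glue) p = path_prob w (fst p) * path_prob w (snd p)"
    using A B by (auto simp: glue_def pp_glue)
  have s2: "(path_prob w \<circ> glue) summable_on (A \<times> B)"
    using sC summable_on_reindex[OF inj] by blast
  have s3: "(\<lambda>p. path_prob w (fst p) * path_prob w (snd p)) summable_on (A \<times> B)"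
  proof -
    have "(path_prob w \<circ> glue) summable_on (A \<times> B) \<longleftrightarrow> (\<lambda>p. path_prob w (fst p) * path_prob w (snd p)) summable_on (A \<times> B)"
      by (rule summable_on_cong) (rule eq)
    then show ?thesis using s2 by (rule iffD1)
  qed
  have "infsum (path_prob w) (glue ` (A \<times> B)) = infsum (path_prob w \<circ> glue) (A \<times> B)"
    by (rule infsum_reindex[OF inj])
  also have "\<dots> = infsum (\<lambda>p. path_prob w (fst p) * path_prob w (snd p)) (A \<times> B)"
    by (rule infsum_cong) (rule eq)
  also have "\<dots> = infsum (\<lambda>x. infsum (\<lambda>y. path_prob w x * path_prob w y) B) A"
    using infsum_Sigma_banach[OF s3] by (simp only: fst_conv snd_conv)
  also have "\<dots> = infsum (\<lambda>x. path_prob w x * infsum (path_prob w) B) A"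
    by (simp add: infsum_cmult_right')
  also have "\<dots> = infsum (path_prob w) A * infsum (path_prob w) B"
    by (simp add: infsum_cmult_left')
  finally show ?thesis .
qed



lemma first_occ_unique: "c \<notin> set b1 \<Longrightarrow> c \<notin> set b2 \<Longrightarrow> b1 @ c # r1 = b2 @ c # r2 \<Longrightarrow> b1 = b2 \<and> r1 = r2"
proof (induction b1 arbitrary: b2)
  case Nil then show ?case by (cases b2) auto
next
  case (Cons a b1) then show ?case by (cases b2) auto
qed

lemma glue_inj:
  assumes A: "\<forall>xs\<in>A. \<exists>b. xs = pre @ b @ [c] \<and> c \<notin> set b"
    and B: "\<forall>ys\<in>B. ys \<noteq> [] \<and> hd ys = c"
  shows "inj_on glue (A \<times> B)"
proof (rule inj_onI, clarify)
  fix p1 s1 p2 s2 assume m: "p1 \<in> A" "s1 \<in> B" "p2 \<in> A" "s2 \<in> B" and e: "glue (p1, s1) = glue (p2, s2)"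
  obtain b1 where b1: "p1 = pre @ b1 @ [c]" "c \<notin> set b1" using A m by blast
  obtain b2 where b2: "p2 = pre @ b2 @ [c]" "c \<notin> set b2" using A m by blast
  have "b1 @ c # tl s1 = b2 @ c # tl s2" using e b1 b2 by (simp add: glue_def)
  then have "b1 = b2 \<and> tl s1 = tl s2" using b1(2) b2(2) first_occ_unique by metis
  moreover have "s1 = c # tl s1" "s2 = c # tl s2" using B m by (metis list.collapse)+
  ultimately show "p1 = p2 \<and> s1 = s2" using b1 b2 by metis
qed

lemma snoc_form: "xs \<noteq> [] \<Longrightarrow> xs = butlast xs @ [last xs]"
  by simp

definition Qs :: "'a \<Rightarrow> 'a \<Rightarrow> 'a list set" where
  "Qs u v = {xs. 2 \<le> length xs \<and> hd xs = u \<and> last xs = v \<and> v \<notin> set (butlast xs) \<and> u \<notin> set (tl xs)}"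
definition Rl :: "'a \<Rightarrow> 'a \<Rightarrow> 'a list set" where
  "Rl u v = {xs. 2 \<le> length xs \<and> hd xs = u \<and> last xs = u \<and> u \<notin> set (tl (butlast xs)) \<and> v \<notin> set xs}"
definition Ret :: "'a \<Rightarrow> 'a list set" where
  "Ret u = {xs. 2 \<le> length xs \<and> hd xs = u \<and> last xs = u \<and> u \<notin> set (tl (butlast xs))}"
definition HF :: "'a \<Rightarrow> 'a \<Rightarrow> 'a \<Rightarrow> 'a list set" where
  "HF e x y = {xs \<in> first_passage_paths e {x,y}. last xs = x}"

lemma pfree_FP: "pfree e (first_passage_paths e S)"
  unfolding pfree_def first_passage_paths_def
proof (intro conjI ballI allI impI)
  fix xs zs assume a: "xs \<in> {xs. xs \<noteq> [] \<and> hd xs = e \<and> last xs \<in> S \<and> set (butlast xs) \<inter> S = {}}"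
     "xs @ zs \<in> {xs. xs \<noteq> [] \<and> hd xs = e \<and> last xs \<in> S \<and> set (butlast xs) \<inter> S = {}}"
  show "zs = []"
  proof (rule ccontr)
    assume "zs \<noteq> []"
    then have "butlast (xs @ zs) = xs @ butlast zs" by (simp add: butlast_append)
    then have "last xs \<in> set (butlast (xs @ zs))" using a by simp
    then show False using a by blast
  qed
qed auto

lemma pfree_Ret: "pfree u (Ret u)"
  unfolding pfree_def Ret_def
proof (intro conjI ballI allI impI)
  fix xs zs assume a: "xs \<in> {xs. 2 \<le> length xs \<and> hd xs = u \<and> last xs = u \<and> u \<notin> set (tl (butlast xs))}"
     "xs @ zs \<in> {xs. 2 \<le> length xs \<and> hd xs = u \<and> last xs = u \<and> u \<notin> set (tl (butlast xs))}"
  then have "2 \<le> length xs" by simp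
  show "zs = []"
  proof (rule ccontr)
    assume "zs \<noteq> []"
    moreover have "xs \<noteq> []" using a by auto
    ultimately have "tl (butlast (xs @ zs)) = tl xs @ butlast zs" by (simp add: butlast_append)
    moreover have "last xs \<in> set (tl xs)"
    proof (cases xs)
      case (Cons a t)
      then have "t \<noteq> []" using \<open>2 \<le> length xs\<close> by auto
      then show ?thesis using Cons by simp
    qed (use \<open>xs \<noteq> []\<close> in simp)
    moreover have "last xs = u" "u \<notin> set (tl (butlast (xs @ zs)))" using a by simp_all
    ultimately show False by simp
  qed
qed auto

lemma pfree_Q: "pfree u (Qs u v)"
  unfolding pfree_def Qs_def
proof (intro conjI ballI allI impI)
  fix xs zs assume a: "xs \<in> {xs. 2 \<le> length xs \<and> hd xs = u \<and> last xs = v \<and> v \<notin> set (butlast xs) \<and> u \<notin> set (tl xs)}"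
     "xs @ zs \<in> {xs. 2 \<le> length xs \<and> hd xs = u \<and> last xs = v \<and> v \<notin> set (butlast xs) \<and> u \<notin> set (tl xs)}"
  show "zs = []"
  proof (rule ccontr)
    assume "zs \<noteq> []"
    then have "butlast (xs @ zs) = xs @ butlast zs" by (simp add: butlast_append)
    moreover have "xs \<noteq> []" using a by auto
    ultimately have "last xs \<in> set (butlast (xs @ zs))" by simp
    moreover have "last xs = v" "v \<notin> set (butlast (xs @ zs))" using a by simp_all
    ultimately show False by simp
  qed
qed auto

lemma Rl_sub: "Rl u v \<subseteq> Ret u" unfolding Rl_def Ret_def by auto
lemma HF_sub: "HF e x y \<subseteq> first_passage_paths e {x,y}" unfolding HF_def by auto

lemma FP_mem: "xs \<in> first_passage_paths e S \<longleftrightarrow> xs \<noteq> [] \<and> hd xs = e \<and> last xs \<in> S \<and> set (butlast xs) \<inter> S = {}"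
  by (simp add: first_passage_paths_def)

lemma glue_eq: "q \<noteq> [] \<Longrightarrow> glue (p, q) = p @ tl q" by (simp add: glue_def)

lemma D0:
  assumes "x \<noteq> y"
  shows "first_passage_paths e {x,y} = HF e x y \<union> HF e y x" "HF e x y \<inter> HF e y x = {}"
  using assms unfolding HF_def by (auto simp: FP_mem)

lemma D1:
  assumes xy: "x \<noteq> y"
  shows "first_passage_paths e {x} = HF e x y \<union> glue ` (HF e y x \<times> first_passage_paths y {x})"
    "HF e x y \<inter> glue ` (HF e y x \<times> first_passage_paths y {x}) = {}"
proof -
  have yin: "y \<in> set (glue pq)" if pqm: "pq \<in> HF e y x \<times> first_passage_paths y {x}" for pq
  proof -
    obtain p q where pq: "pq = (p, q)" "p \<in> HF e y x" "q \<in> first_passage_paths y {x}" using pqm by (cases pq) simp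
    then have "p \<noteq> []" "last p = y" unfolding HF_def FP_mem by auto
    then show ?thesis using pq by (simp add: glue_def) (metis last_in_set)
  qed
  have noy: "y \<notin> set zs" if "zs \<in> HF e x y" for zs
  proof -
    have "zs \<noteq> []" "last zs = x" "y \<notin> set (butlast zs)" using that unfolding HF_def FP_mem by auto
    moreover have "set zs = set (butlast zs @ [last zs])" using \<open>zs \<noteq> []\<close> by simp
    ultimately show ?thesis using xy by simp
  qed
  show "HF e x y \<inter> glue ` (HF e y x \<times> first_passage_paths y {x}) = {}"
    using yin noy by blast
  show "first_passage_paths e {x} = HF e x y \<union> glue ` (HF e y x \<times> first_passage_paths y {x})"
  proof (intro equalityI subsetI)
    fix zs assume zs: "zs \<in> first_passage_paths e {x}"
    then have z: "zs \<noteq> []" "hd zs = e" "last zs = x" "x \<notin> set (butlast zs)" unfolding FP_mem by auto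
    show "zs \<in> HF e x y \<union> glue ` (HF e y x \<times> first_passage_paths y {x})"
    proof (cases "y \<in> set zs")
      case False
      then have "y \<notin> set (butlast zs)" by (meson in_set_butlastD)
      then have "zs \<in> HF e x y" using z unfolding HF_def FP_mem by auto
      then show ?thesis by simp
    next
      case True
      obtain b s where bs: "zs = b @ y # s" "y \<notin> set b" using split_list_first[OF True] by blast
      have "s \<noteq> []" using bs z xy by auto
      have bl: "butlast zs = b @ y # butlast s" using bs \<open>s \<noteq> []\<close> by (simp add: butlast_append)
      have l: "last zs = last s" using bs \<open>s \<noteq> []\<close> by simp
      have p: "b @ [y] \<in> HF e y x"
        unfolding HF_def FP_mem using bs bl z xy by (cases b) auto
      have q: "y # s \<in> first_passage_paths y {x}"
        unfolding FP_mem using bl l z \<open>s \<noteq> []\<close> by auto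
      have "zs = glue (b @ [y], y # s)" using bs by (simp add: glue_def)
      then show ?thesis using p q by blast
    qed
  next
    fix zs assume "zs \<in> HF e x y \<union> glue ` (HF e y x \<times> first_passage_paths y {x})"
    then show "zs \<in> first_passage_paths e {x}"
    proof
      assume "zs \<in> HF e x y" then show ?thesis unfolding HF_def FP_mem by auto
    next
      assume "zs \<in> glue ` (HF e y x \<times> first_passage_paths y {x})"
      then obtain p q where pq: "zs = glue (p, q)" "p \<in> HF e y x" "q \<in> first_passage_paths y {x}" by auto
      have p: "p \<noteq> []" "hd p = e" "last p = y" "x \<notin> set (butlast p)" using pq(2) unfolding HF_def FP_mem by auto
      have q: "q \<noteq> []" "hd q = y" "last q = x" "x \<notin> set (butlast q)" using pq(3) unfolding FP_mem by auto
      obtain t where t: "q = y # t" using q by (metis list.collapse)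
      have "t \<noteq> []" using t q xy by auto
      have pe: "p = butlast p @ [y]" using p(1) p(3) append_butlast_last_id by metis
      have zs: "zs = butlast p @ y # t" using pq(1) t pe by (simp add: glue_def)
      have hh: "hd (a @ b # c) = hd (a @ [b])" for a c :: "'a list" and b :: 'a by (cases a) simp_all
      have "hd zs = e" using zs p pe hh by metis
      moreover have "last zs = x" using zs q t \<open>t \<noteq> []\<close> by simp
      moreover have "butlast zs = butlast p @ y # butlast t" using zs \<open>t \<noteq> []\<close> by (simp add: butlast_append)
      ultimately show ?thesis unfolding FP_mem using p q t xy \<open>t \<noteq> []\<close> by auto
    qed
  qed
qed

lemma two_form: "2 \<le> length xs \<Longrightarrow> xs = hd xs # tl (butlast xs) @ [last xs]"
proof (cases xs)
  case (Cons a t)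
  assume "2 \<le> length xs"
  then have "t \<noteq> []" using Cons by auto
  then show ?thesis using Cons by (simp add: butlast_append)
qed simp

lemma Rl_form: "p \<in> Rl u v \<Longrightarrow> p = u # tl (butlast p) @ [u] \<and> u \<notin> set (tl (butlast p)) \<and> v \<notin> set p"
  unfolding Rl_def using two_form by fastforce

lemma D3:
  assumes uv: "u \<noteq> v"
  shows "first_passage_paths u {v} = Qs u v \<union> glue ` (Rl u v \<times> first_passage_paths u {v})"
    "Qs u v \<inter> glue ` (Rl u v \<times> first_passage_paths u {v}) = {}"
proof -
  have G: "\<exists>b s. glue pq = u # b @ u # s \<and> u \<notin> set b \<and> v \<notin> set b \<and> u # s \<in> first_passage_paths u {v}"
    if pqm: "pq \<in> Rl u v \<times> first_passage_paths u {v}" for pq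
  proof -
    obtain p q where pq: "pq = (p, q)" "p \<in> Rl u v" "q \<in> first_passage_paths u {v}" using pqm by (cases pq) simp
    define b where "b = tl (butlast p)"
    have p0: "p = u # b @ [u]" "u \<notin> set b" "v \<notin> set p" using Rl_form[OF pq(2)] b_def by auto
    have "v \<notin> set (u # b @ [u])" using p0(1,3) by simp
    then have p: "p = u # b @ [u]" "u \<notin> set b" "v \<notin> set b" using p0 by simp_all
    have "q \<noteq> []" "hd q = u" using pq(3) unfolding FP_mem by auto
    then obtain s where s: "q = u # s" by (metis list.collapse)
    have "glue pq = u # b @ u # s" using pq(1) p s by (simp add: glue_def)
    then show ?thesis using p s pq(3) by blast
  qed
  show "Qs u v \<inter> glue ` (Rl u v \<times> first_passage_paths u {v}) = {}"
  proof (rule ccontr)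
    assume "Qs u v \<inter> glue ` (Rl u v \<times> first_passage_paths u {v}) \<noteq> {}"
    then obtain pq where m: "pq \<in> Rl u v \<times> first_passage_paths u {v}" "glue pq \<in> Qs u v" by blast
    obtain b s where "glue pq = u # b @ u # s" using G[OF m(1)] by blast
    then show False using m(2) unfolding Qs_def by simp
  qed
  show "first_passage_paths u {v} = Qs u v \<union> glue ` (Rl u v \<times> first_passage_paths u {v})"
  proof (intro equalityI subsetI)
    fix zs assume zs: "zs \<in> first_passage_paths u {v}"
    then have z: "zs \<noteq> []" "hd zs = u" "last zs = v" "v \<notin> set (butlast zs)" unfolding FP_mem by auto
    then obtain t where t: "zs = u # t" by (metis list.collapse)
    have "t \<noteq> []" using t z uv by auto
    show "zs \<in> Qs u v \<union> glue ` (Rl u v \<times> first_passage_paths u {v})"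
    proof (cases "u \<in> set t")
      case False
      have "2 \<le> length zs" using t \<open>t \<noteq> []\<close> by (cases t) auto
      then have "zs \<in> Qs u v" unfolding Qs_def using t z False by auto
      then show ?thesis by simp
    next
      case True
      obtain b s where bs: "t = b @ u # s" "u \<notin> set b" using split_list_first[OF True] by blast
      have "s \<noteq> []" using bs t z uv by auto
      have bl: "butlast zs = u # b @ u # butlast s" using t bs \<open>s \<noteq> []\<close> by (simp add: butlast_append)
      have l: "last zs = last s" using t bs \<open>s \<noteq> []\<close> by simp
      have p: "u # b @ [u] \<in> Rl u v"
        unfolding Rl_def using bs bl z uv by auto
      have q: "u # s \<in> first_passage_paths u {v}"
        unfolding FP_mem using bl l z \<open>s \<noteq> []\<close> by auto
      have "zs = glue (u # b @ [u], u # s)" using bs t by (simp add: glue_def)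
      then show ?thesis using p q by blast
    qed
  next
    fix zs assume "zs \<in> Qs u v \<union> glue ` (Rl u v \<times> first_passage_paths u {v})"
    then show "zs \<in> first_passage_paths u {v}"
    proof
      assume "zs \<in> Qs u v" then show ?thesis unfolding Qs_def FP_mem by auto
    next
      assume "zs \<in> glue ` (Rl u v \<times> first_passage_paths u {v})"
      then obtain pq where m: "pq \<in> Rl u v \<times> first_passage_paths u {v}" "zs = glue pq" by blast
      obtain b s where bs: "zs = u # b @ u # s" "u \<notin> set b" "v \<notin> set b" "u # s \<in> first_passage_paths u {v}"
        using G[OF m(1)] m(2) by blast
      have q: "last (u # s) = v" "v \<notin> set (butlast (u # s))" using bs(4) unfolding FP_mem by auto
      have "s \<noteq> []" using q uv by auto
      have "butlast zs = u # b @ u # butlast s" using bs \<open>s \<noteq> []\<close> by (simp add: butlast_append)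
      moreover have "last zs = v" using bs q \<open>s \<noteq> []\<close> by simp
      ultimately show ?thesis unfolding FP_mem using bs q uv \<open>s \<noteq> []\<close> by auto
    qed
  qed
qed

lemma Ret_form: "p \<in> Ret u \<Longrightarrow> p = u # tl (butlast p) @ [u] \<and> u \<notin> set (tl (butlast p))"
  unfolding Ret_def using two_form by fastforce

lemma D4:
  assumes uv: "u \<noteq> v"
  shows "Ret u = Rl u v \<union> glue ` (Qs u v \<times> first_passage_paths v {u})"
    "Rl u v \<inter> glue ` (Qs u v \<times> first_passage_paths v {u}) = {}"
proof -
  have G: "\<exists>b1 b2. glue pq = u # b1 @ v # b2 @ [u] \<and> u \<notin> set b1 \<and> u \<notin> set b2 \<and> v \<notin> set b1"
    if pqm: "pq \<in> Qs u v \<times> first_passage_paths v {u}" for pq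
  proof -
    obtain p q where pq: "pq = (p, q)" "p \<in> Qs u v" "q \<in> first_passage_paths v {u}" using pqm by (cases pq) simp
    have p0: "2 \<le> length p" "hd p = u" "last p = v" "v \<notin> set (butlast p)" "u \<notin> set (tl p)" using pq(2) unfolding Qs_def by auto
    define b1 where "b1 = tl (butlast p)"
    have pf: "p = u # b1 @ [v]" using two_form[OF p0(1)] p0 b1_def by simp
    have "tl p = b1 @ [v]" "butlast p = u # b1" using pf by (metis list.sel(3), metis butlast_snoc append_Cons)
    then have p: "u \<notin> set b1" "v \<notin> set b1" using p0(4,5) by auto
    have q0: "q \<noteq> []" "hd q = v" "last q = u" "u \<notin> set (butlast q)" using pq(3) unfolding FP_mem by auto
    then obtain s where s: "q = v # s" by (metis list.collapse)
    have "s \<noteq> []" using s q0 uv by auto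
    then obtain s' where sf: "s = s' @ [u]" using s q0 by (metis append_butlast_last_id last_ConsR)
    have "u \<notin> set s'" using q0 s sf by simp
    moreover have "glue pq = u # b1 @ v # s' @ [u]" using pq(1) pf s sf by (simp add: glue_def)
    ultimately show ?thesis using p by blast
  qed
  show "Rl u v \<inter> glue ` (Qs u v \<times> first_passage_paths v {u}) = {}"
  proof (rule ccontr)
    assume "Rl u v \<inter> glue ` (Qs u v \<times> first_passage_paths v {u}) \<noteq> {}"
    then obtain pq where m: "pq \<in> Qs u v \<times> first_passage_paths v {u}" "glue pq \<in> Rl u v" by blast
    obtain b1 b2 where "glue pq = u # b1 @ v # b2 @ [u]" using G[OF m(1)] by blast
    then show False using m(2) unfolding Rl_def by simp
  qed
  show "Ret u = Rl u v \<union> glue ` (Qs u v \<times> first_passage_paths v {u})"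
  proof (intro equalityI subsetI)
    fix zs assume zs: "zs \<in> Ret u"
    define b where "b = tl (butlast zs)"
    have zf: "zs = u # b @ [u]" "u \<notin> set b" using Ret_form[OF zs] b_def by auto
    show "zs \<in> Rl u v \<union> glue ` (Qs u v \<times> first_passage_paths v {u})"
    proof (cases "v \<in> set b")
      case False
      then have "v \<notin> set zs" using zf uv by simp
      then have "zs \<in> Rl u v" using zs unfolding Rl_def Ret_def by simp
      then show ?thesis by simp
    next
      case True
      obtain b1 b2 where bs: "b = b1 @ v # b2" "v \<notin> set b1" using split_list_first[OF True] by blast
      have p: "u # b1 @ [v] \<in> Qs u v" unfolding Qs_def using bs zf uv by auto
      have q: "v # b2 @ [u] \<in> first_passage_paths v {u}" unfolding FP_mem using bs zf uv by (simp add: butlast_append)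
      have "zs = glue (u # b1 @ [v], v # b2 @ [u])" using bs zf by (simp add: glue_def)
      then show ?thesis using p q by blast
    qed
  next
    fix zs assume "zs \<in> Rl u v \<union> glue ` (Qs u v \<times> first_passage_paths v {u})"
    then show "zs \<in> Ret u"
    proof
      assume "zs \<in> Rl u v" then show ?thesis using Rl_sub[of u v] by (rule subsetD[rotated])
    next
      assume "zs \<in> glue ` (Qs u v \<times> first_passage_paths v {u})"
      then obtain pq where m: "pq \<in> Qs u v \<times> first_passage_paths v {u}" "zs = glue pq" by blast
      obtain b1 b2 where bs: "zs = u # b1 @ v # b2 @ [u]" "u \<notin> set b1" "u \<notin> set b2"
        using G[OF m(1)] m(2) by blast
      have "butlast zs = u # b1 @ v # b2" using bs by (simp add: butlast_append)
      then show ?thesis unfolding Ret_def using bs uv by simp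
    qed
  qed
qed

lemma glue_split:
  assumes wg: "weighted_graph w" and sC: "path_prob w summable_on C"
    and C: "C = A' \<union> glue ` (A \<times> B)" and disj: "A' \<inter> glue ` (A \<times> B) = {}"
    and sA: "path_prob w summable_on A" and sB: "path_prob w summable_on B"
    and Af: "\<forall>xs\<in>A. \<exists>b. xs = pre @ b @ [c] \<and> c \<notin> set b"
    and Bf: "\<forall>ys\<in>B. ys \<noteq> [] \<and> hd ys = c"
  shows "infsum (path_prob w) C = infsum (path_prob w) A' + infsum (path_prob w) A * infsum (path_prob w) B"
proof -
  have s1: "path_prob w summable_on A'" using summable_on_subset[OF sC] C by blast
  have s2: "path_prob w summable_on glue ` (A \<times> B)" using summable_on_subset[OF sC] C by blast
  have Al: "\<forall>xs\<in>A. xs \<noteq> [] \<and> last xs = c" using Af by fastforce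
  have "infsum (path_prob w) C = infsum (path_prob w) A' + infsum (path_prob w) (glue ` (A \<times> B))"
    unfolding C by (rule infsum_Un_disjoint[OF s1 s2 disj])
  also have "infsum (path_prob w) (glue ` (A \<times> B)) = infsum (path_prob w) A * infsum (path_prob w) B"
    by (rule glue_sum[OF wg Al Bf glue_inj[OF Af Bf] s2 sA sB])
  finally show ?thesis .
qed

lemma deg_const:
  assumes wg: "weighted_graph w" and vt: "vertex_transitive w"
  shows "deg w a = deg w b"
proof -
  obtain \<phi> where phi: "bij \<phi>" "\<And>a b. w (\<phi> a) (\<phi> b) = w a b" "\<phi> a = b"
    using vt unfolding vertex_transitive_def by blast
  have inj: "inj \<phi>" using phi(1) bij_is_inj by blast
  have eq: "{y. 0 < w b y} = \<phi> ` {z. 0 < w a z}"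
  proof (intro equalityI subsetI)
    fix y assume "y \<in> {y. 0 < w b y}"
    moreover obtain z where "y = \<phi> z" using phi(1) by (metis bij_pointE)
    ultimately show "y \<in> \<phi> ` {z. 0 < w a z}" using phi by auto
  qed (use phi in auto)
  have "deg w b = sum (w b) (\<phi> ` {z. 0 < w a z})" unfolding deg_def eq by simp
  also have "\<dots> = sum (w b \<circ> \<phi>) {z. 0 < w a z}" by (rule sum.reindex) (use inj in \<open>simp add: inj_on_def\<close>)
  also have "\<dots> = sum (w a) {z. 0 < w a z}"
  proof (rule sum.cong)
    fix z show "(w b \<circ> \<phi>) z = w a z" using phi(2)[of a z] phi(3) by simp
  qed simp
  finally show ?thesis by (simp add: deg_def)
qed

lemma pp_snoc: "xs \<noteq> [] \<Longrightarrow> path_prob w (xs @ [c]) = path_prob w xs * (w (last xs) c / deg w (last xs))"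
  using pp_glue[of xs "[last xs, c]" w] by simp

lemma pp_rev:
  assumes wg: "weighted_graph w" and dc: "\<And>a b. deg w a = deg w b"
  shows "path_prob w (rev xs) = path_prob w xs"
proof (induction xs)
  case (Cons a t)
  show ?case
  proof (cases t)
    case (Cons b t')
    have "path_prob w (rev (a # t)) = path_prob w (rev t @ [a])" by simp
    also have "\<dots> = path_prob w (rev t) * (w b a / deg w b)"
      using pp_snoc[of "rev t" w a] Cons by (simp add: last_rev)
    also have "\<dots> = path_prob w t * (w a b / deg w a)"
      using Cons.IH wg dc[of a b] unfolding weighted_graph_def by metis
    also have "\<dots> = path_prob w (a # t)" using Cons by simp
    finally show ?thesis .
  qed simp
qed simp

lemma tl_rev': "tl (rev xs) = rev (butlast xs)" by (metis butlast_rev rev_rev_ident)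

lemma Q_rev: "Qs u v = rev ` Qs v u"
proof -
  have "rev xs \<in> Qs u v" if "xs \<in> Qs v u" for xs u v
  proof -
    have "xs \<noteq> []" using that unfolding Qs_def by auto
    then show ?thesis using that unfolding Qs_def by (simp add: hd_rev last_rev butlast_rev tl_rev')
  qed
  then show ?thesis by (metis (no_types, lifting) image_eqI rev_rev_ident subsetI subset_antisym image_subset_iff)
qed

lemma pp_map:
  assumes "\<And>a b. w (\<phi> a) (\<phi> b) = w a b" "\<And>a. deg w (\<phi> a) = deg w a"
  shows "path_prob w (map \<phi> xs) = path_prob w xs"
proof (induction xs)
  case (Cons a t) then show ?case using assms by (cases t) auto
qed simp

lemma Ret_map: assumes "inj \<phi>" shows "map \<phi> xs \<in> Ret (\<phi> u) \<longleftrightarrow> xs \<in> Ret u"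
proof (cases "xs = []")
  case True then show ?thesis unfolding Ret_def by simp
next
  case False
  have "tl (butlast (map \<phi> xs)) = map \<phi> (tl (butlast xs))" by (simp add: map_butlast map_tl)
  then show ?thesis using False assms unfolding Ret_def
    by (auto simp: hd_map last_map inj_eq inj_image_mem_iff)
qed

lemma Ret_const:
  assumes wg: "weighted_graph w" and vt: "vertex_transitive w"
  shows "infsum (path_prob w) (Ret a) = infsum (path_prob w) (Ret b)"
proof -
  obtain \<phi> where phi: "bij \<phi>" "\<And>a b. w (\<phi> a) (\<phi> b) = w a b" "\<phi> a = b"
    using vt unfolding vertex_transitive_def by blast
  have inj: "inj \<phi>" using phi(1) bij_is_inj by blast
  have injm: "inj (map \<phi>)" using inj by (simp add: inj_mapI)
  have eq: "Ret b = map \<phi> ` Ret a"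
  proof (intro equalityI subsetI)
    fix xs assume xs: "xs \<in> Ret b"
    have e1: "map \<phi> (map (inv \<phi>) xs) = xs"
      by (simp add: o_def surj_f_inv_f[OF bij_is_surj[OF phi(1)]])
    have "map \<phi> (map (inv \<phi>) xs) \<in> Ret (\<phi> a)" unfolding e1 phi(3) by (rule xs)
    then have "map (inv \<phi>) xs \<in> Ret a" by (rule Ret_map[OF inj, THEN iffD1])
    then show "xs \<in> map \<phi> ` Ret a" using e1 by (metis image_eqI)
  next
    fix xs assume "xs \<in> map \<phi> ` Ret a"
    then obtain ys where ys: "xs = map \<phi> ys" "ys \<in> Ret a" by blast
    have "map \<phi> ys \<in> Ret (\<phi> a)" by (rule Ret_map[OF inj, THEN iffD2, OF ys(2)])
    then show "xs \<in> Ret b" using ys(1) phi(3) by simp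
  qed
  have "infsum (path_prob w) (Ret b) = infsum (path_prob w \<circ> map \<phi>) (Ret a)"
    unfolding eq by (rule infsum_reindex) (rule inj_on_subset[OF injm subset_UNIV])
  also have "\<dots> = infsum (path_prob w) (Ret a)"
  proof (rule infsum_cong)
    fix xs
    have "\<And>c. deg w (\<phi> c) = deg w c" by (rule deg_const[OF wg vt])
    then show "(path_prob w \<circ> map \<phi>) xs = path_prob w xs" unfolding o_def by (rule pp_map[of w \<phi>, OF phi(2)])
  qed
  finally show ?thesis by simp
qed

lemma pos_Q:
  assumes wg: "weighted_graph w" and lf: "locally_finite w" and uv: "u \<noteq> v"
    and pos: "infsum (path_prob w) (first_passage_paths u {v}) > 0"
  shows "infsum (path_prob w) (Qs u v) > 0"
proof -
  obtain xs where xs: "xs \<in> first_passage_paths u {v}" "path_prob w xs > 0"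
  proof (rule ccontr)
    assume "\<not> ?thesis"
    then have "\<forall>xs\<in>first_passage_paths u {v}. path_prob w xs = 0" using pp_nonneg[OF wg] that
      by (metis less_eq_real_def)
    then have "infsum (path_prob w) (first_passage_paths u {v}) = 0" by (simp add: infsum_0)
    then show False using pos by simp
  qed
  have z: "xs \<noteq> []" "hd xs = u" "last xs = v" "v \<notin> set (butlast xs)" using xs(1) unfolding FP_mem by auto
  have "u \<in> set xs" using z by (metis hd_in_set)
  then obtain b s where bs: "xs = b @ u # s" "u \<notin> set s" using split_list_last by metis
  have "s \<noteq> []" using bs z uv by auto
  have "butlast xs = b @ u # butlast s" using bs \<open>s \<noteq> []\<close> by (simp add: butlast_append)
  moreover have "Suc 0 \<le> length s" using \<open>s \<noteq> []\<close> by (cases s) auto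
  ultimately have Q: "u # s \<in> Qs u v" unfolding Qs_def using bs z \<open>s \<noteq> []\<close> by auto
  have "path_prob w xs = path_prob w (b @ [u]) * path_prob w (u # s)"
    using pp_glue[of "b @ [u]" "u # s" w] bs by simp
  then have p: "path_prob w (u # s) > 0" using xs(2) pp_nonneg[OF wg, of "b @ [u]"] pp_nonneg[OF wg, of "u # s"]
    by (metis less_eq_real_def mult_zero_right)
  have "infsum (path_prob w) {u # s} \<le> infsum (path_prob w) (Qs u v)"
    by (rule infsum_mono_neutral) (use Q pfree_summable[OF wg lf pfree_Q] pp_nonneg[OF wg] in auto)
  then show ?thesis using p by simp
qed

lemma sFP: "weighted_graph w \<Longrightarrow> locally_finite w \<Longrightarrow> path_prob w summable_on first_passage_paths e S"
  by (rule pfree_summable[OF _ _ pfree_FP])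
lemma sHF: "weighted_graph w \<Longrightarrow> locally_finite w \<Longrightarrow> path_prob w summable_on HF e x y"
  by (rule pfree_summable[OF _ _ pfree_subset[OF pfree_FP HF_sub]])
lemma sQ: "weighted_graph w \<Longrightarrow> locally_finite w \<Longrightarrow> path_prob w summable_on Qs u v"
  by (rule pfree_summable[OF _ _ pfree_Q])
lemma sRet: "weighted_graph w \<Longrightarrow> locally_finite w \<Longrightarrow> path_prob w summable_on Ret u"
  by (rule pfree_summable[OF _ _ pfree_Ret])
lemma sRl: "weighted_graph w \<Longrightarrow> locally_finite w \<Longrightarrow> path_prob w summable_on Rl u v"
  by (rule pfree_summable[OF _ _ pfree_subset[OF pfree_Ret Rl_sub]])

lemma le1FP: "weighted_graph w \<Longrightarrow> locally_finite w \<Longrightarrow> infsum (path_prob w) (first_passage_paths e S) \<le> 1"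
  by (rule pfree_le1[OF _ _ pfree_FP])
lemma le1Q: "weighted_graph w \<Longrightarrow> locally_finite w \<Longrightarrow> infsum (path_prob w) (Qs u v) \<le> 1"
  by (rule pfree_le1[OF _ _ pfree_Q])
lemma le1Rl: "weighted_graph w \<Longrightarrow> locally_finite w \<Longrightarrow> infsum (path_prob w) (Rl u v) \<le> 1"
  by (rule pfree_le1[OF _ _ pfree_subset[OF pfree_Ret Rl_sub]])
lemma le1Ret: "weighted_graph w \<Longrightarrow> locally_finite w \<Longrightarrow> infsum (path_prob w) (Ret u) \<le> 1"
  by (rule pfree_le1[OF _ _ pfree_Ret])

lemma R0:
  assumes wg: "weighted_graph w" and lf: "locally_finite w" and xy: "x \<noteq> y"
  shows "infsum (path_prob w) (first_passage_paths e {x,y}) = infsum (path_prob w) (HF e x y) + infsum (path_prob w) (HF e y x)"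
  unfolding D0(1)[OF xy] by (rule infsum_Un_disjoint[OF sHF[OF wg lf] sHF[OF wg lf] D0(2)[OF xy]])

lemma R1:
  assumes wg: "weighted_graph w" and lf: "locally_finite w" and xy: "x \<noteq> y"
  shows "infsum (path_prob w) (first_passage_paths e {x}) = infsum (path_prob w) (HF e x y)
     + infsum (path_prob w) (HF e y x) * infsum (path_prob w) (first_passage_paths y {x})"
proof (rule glue_split[OF wg sFP[OF wg lf] D1(1)[OF xy] D1(2)[OF xy] sHF[OF wg lf] sFP[OF wg lf], where pre="[]" and c=y])
  show "\<forall>xs\<in>HF e y x. \<exists>b. xs = [] @ b @ [y] \<and> y \<notin> set b"
  proof
    fix xs assume "xs \<in> HF e y x"
    then have "xs \<noteq> []" "last xs = y" "y \<notin> set (butlast xs)" unfolding HF_def FP_mem by auto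
    then show "\<exists>b. xs = [] @ b @ [y] \<and> y \<notin> set b" by (metis append_butlast_last_id append_Nil)
  qed
  show "\<forall>ys\<in>first_passage_paths y {x}. ys \<noteq> [] \<and> hd ys = y" by (auto simp: FP_mem)
qed

lemma R3:
  assumes wg: "weighted_graph w" and lf: "locally_finite w" and uv: "u \<noteq> v"
  shows "infsum (path_prob w) (first_passage_paths u {v}) = infsum (path_prob w) (Qs u v)
     + infsum (path_prob w) (Rl u v) * infsum (path_prob w) (first_passage_paths u {v})"
proof (rule glue_split[OF wg sFP[OF wg lf] D3(1)[OF uv] D3(2)[OF uv] sRl[OF wg lf] sFP[OF wg lf], where pre="[u]" and c=u])
  show "\<forall>xs\<in>Rl u v. \<exists>b. xs = [u] @ b @ [u] \<and> u \<notin> set b"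
    using Rl_form by (metis append_Cons append_Nil)
  show "\<forall>ys\<in>first_passage_paths u {v}. ys \<noteq> [] \<and> hd ys = u" by (auto simp: FP_mem)
qed

lemma R4:
  assumes wg: "weighted_graph w" and lf: "locally_finite w" and uv: "u \<noteq> v"
  shows "infsum (path_prob w) (Ret u) = infsum (path_prob w) (Rl u v)
     + infsum (path_prob w) (Qs u v) * infsum (path_prob w) (first_passage_paths v {u})"
proof (rule glue_split[OF wg sRet[OF wg lf] D4(1)[OF uv] D4(2)[OF uv] sQ[OF wg lf] sFP[OF wg lf], where pre="[]" and c=v])
  show "\<forall>xs\<in>Qs u v. \<exists>b. xs = [] @ b @ [v] \<and> v \<notin> set b"
  proof
    fix xs assume "xs \<in> Qs u v"
    then have "xs \<noteq> []" "last xs = v" "v \<notin> set (butlast xs)" unfolding Qs_def by auto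
    then show "\<exists>b. xs = [] @ b @ [v] \<and> v \<notin> set b" by (metis append_butlast_last_id append_Nil)
  qed
  show "\<forall>ys\<in>first_passage_paths v {u}. ys \<noteq> [] \<and> hd ys = v" by (auto simp: FP_mem)
qed

lemma Q_sym:
  assumes wg: "weighted_graph w" and vt: "vertex_transitive w"
  shows "infsum (path_prob w) (Qs u v) = infsum (path_prob w) (Qs v u)"
proof -
  have "infsum (path_prob w) (Qs u v) = infsum (path_prob w \<circ> rev) (Qs v u)"
    unfolding Q_rev[of u v] by (rule infsum_reindex) (simp add: inj_on_def)
  also have "\<dots> = infsum (path_prob w) (Qs v u)"
  proof (rule infsum_cong)
    fix xs
    have "\<And>a b. deg w a = deg w b" by (rule deg_const[OF wg vt])
    then show "(path_prob w \<circ> rev) xs = path_prob w xs" unfolding o_def by (rule pp_rev[OF wg])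
  qed
  finally show ?thesis .
qed

lemma alg_sym:
  fixes A B q ru rv R :: real
  assumes A0: "0 \<le> A" "A \<le> 1" and B0: "0 \<le> B" "B \<le> 1" and q0: "0 < q"
    and e1: "A = q + ru * A" and e2: "B = q + rv * B"
    and e3: "R = ru + q * B" and e4: "R = rv + q * A"
  shows "A = B"
proof -
  define a where "a = 1 - ru"
  define b where "b = 1 - rv"
  have Aa: "A * a = q"
  proof -
    have "A * a = A - ru * A" unfolding a_def by (simp add: algebra_simps)
    then show ?thesis using e1 by linarith
  qed
  have Bb: "B * b = q"
  proof -
    have "B * b = B - rv * B" unfolding b_def by (simp add: algebra_simps)
    then show ?thesis using e2 by linarith
  qed
  have "a > 0"
  proof (rule ccontr)
    assume "\<not> a > 0" then have "A * a \<le> 0" using A0 by (simp add: mult_nonneg_nonpos)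
    then show False using Aa q0 by simp
  qed
  have "b > 0"
  proof (rule ccontr)
    assume "\<not> b > 0" then have "B * b \<le> 0" using B0 by (simp add: mult_nonneg_nonpos)
    then show False using Bb q0 by simp
  qed
  have d: "b - a = q * (A - B)" using e3 e4 a_def b_def by (simp add: algebra_simps)
  have "(b - a) * (a * b) = q * (A * a * b - B * b * a)"
  proof -
    have "(b - a) * (a * b) = (q * (A - B)) * (a * b)" using d by simp
    also have "\<dots> = q * (A * a * b - B * b * a)" by (simp add: algebra_simps)
    finally show ?thesis .
  qed
  also have "\<dots> = q * (q * b - q * a)" using Aa Bb by simp
  finally have key: "(b - a) * (a * b) = (b - a) * (q * q)" by (simp add: algebra_simps)
  show ?thesis
  proof (cases "a = b")
    case True then show ?thesis using Aa Bb \<open>a > 0\<close> by (metis mult_cancel_right less_irrefl)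
  next
    case False
    then have "a * b = q * q" using key by simp
    moreover have "(A * B) * (a * b) = (A * a) * (B * b)" by (simp add: algebra_simps)
    ultimately have "(A * B) * (a * b) = 1 * (a * b)" using Aa Bb by simp
    then have "A * B = 1" using \<open>a > 0\<close> \<open>b > 0\<close> by simp
    then have "A = 1" "B = 1" using A0 B0 by (metis mult_le_one antisym_conv less_eq_real_def mult.commute mult_left_le)+
    then show ?thesis by simp
  qed
qed

lemma P_sym:
  assumes wg: "weighted_graph w" and lf: "locally_finite w" and vt: "vertex_transitive w" and uv: "u \<noteq> v"
  shows "infsum (path_prob w) (first_passage_paths u {v}) = infsum (path_prob w) (first_passage_paths v {u})"
proof -
  let ?A = "infsum (path_prob w) (first_passage_paths u {v})"
  let ?B = "infsum (path_prob w) (first_passage_paths v {u})"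
  let ?q = "infsum (path_prob w) (Qs u v)"
  have qs: "infsum (path_prob w) (Qs v u) = ?q" using Q_sym[OF wg vt] by simp
  have A0: "0 \<le> ?A" "?A \<le> 1" using pfree_nonneg[OF wg] le1FP[OF wg lf] by auto
  have B0: "0 \<le> ?B" "?B \<le> 1" using pfree_nonneg[OF wg] le1FP[OF wg lf] by auto
  show ?thesis
  proof (cases "?q > 0")
    case True
    show ?thesis
    proof (rule alg_sym[OF A0 B0 True])
      show "?A = ?q + infsum (path_prob w) (Rl u v) * ?A" by (rule R3[OF wg lf uv])
      show "?B = ?q + infsum (path_prob w) (Rl v u) * ?B" using R3[OF wg lf uv[symmetric]] qs by simp
      show "infsum (path_prob w) (Ret u) = infsum (path_prob w) (Rl u v) + ?q * ?B" by (rule R4[OF wg lf uv])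
      show "infsum (path_prob w) (Ret u) = infsum (path_prob w) (Rl v u) + ?q * ?A"
        using R4[OF wg lf uv[symmetric]] qs Ret_const[OF wg vt, of u v] by simp
    qed
  next
    case False
    then have "\<not> ?A > 0" using pos_Q[OF wg lf uv] by blast
    moreover have "\<not> ?B > 0" using pos_Q[OF wg lf uv[symmetric]] qs False by auto
    ultimately show ?thesis using A0 B0 by simp
  qed
qed

lemma P_lt1:
  assumes wg: "weighted_graph w" and lf: "locally_finite w" and vt: "vertex_transitive w" and uv: "u \<noteq> v"
    and tr: "infsum (path_prob w) (Ret u) < 1"
  shows "infsum (path_prob w) (first_passage_paths u {v}) < 1"
proof (rule ccontr)
  let ?A = "infsum (path_prob w) (first_passage_paths u {v})"
  let ?q = "infsum (path_prob w) (Qs u v)"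
  let ?r = "infsum (path_prob w) (Rl u v)"
  assume "\<not> ?A < 1"
  then have A1: "?A = 1" using le1FP[OF wg lf] by (meson antisym not_le)
  then have B1: "infsum (path_prob w) (first_passage_paths v {u}) = 1" using P_sym[OF wg lf vt uv] by simp
  have "?q = 1 - ?r" using R3[OF wg lf uv] A1 by simp
  then have "infsum (path_prob w) (Ret u) = 1" using R4[OF wg lf uv] B1 by simp
  then show False using tr by simp
qed

lemma main_real:
  fixes a b p Hx Hy :: real
  assumes "0 \<le> a" "0 \<le> b" "0 \<le> p" "p \<le> 1" "Hx = a + b * p" "Hy = b + a * p"
  shows "(Hx > Hy \<longrightarrow> a / (a + b) > 1/2) \<and> (p < 1 \<longrightarrow> (Hx > Hy \<longleftrightarrow> a / (a + b) > 1/2))"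
proof -
  have diff: "Hx - Hy = (a - b) * (1 - p)" using assms by (simp add: algebra_simps)
  have c: "a / (a + b) > 1/2 \<longleftrightarrow> a > b"
  proof (cases "a + b = 0")
    case True then show ?thesis using assms by simp
  next
    case False then have "a + b > 0" using assms by simp
    then show ?thesis by (simp add: field_simps)
  qed
  have 1: "Hx > Hy \<Longrightarrow> a > b"
  proof (rule ccontr)
    assume "Hx > Hy" "\<not> a > b"
    then have "(a - b) * (1 - p) \<le> 0" using assms by (simp add: mult_nonpos_nonneg)
    then show False using diff \<open>Hx > Hy\<close> by simp
  qed
  have 2: "p < 1 \<Longrightarrow> a > b \<Longrightarrow> Hx > Hy"
  proof -
    assume "p < 1" "a > b"
    then have "(a - b) * (1 - p) > 0" by simp
    then show "Hx > Hy" using diff by simp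
  qed
  show ?thesis using 1 2 c by blast
qed

lemma hit_prob_real:
  assumes wg: "weighted_graph w" and lf: "locally_finite w"
  shows "hit_prob w e S = ennreal (infsum (path_prob w) (first_passage_paths e S))"
  unfolding hit_prob_def by (rule ennreal_infsum[OF wg sFP[OF wg lf]])

lemma hit_first_real:
  assumes wg: "weighted_graph w" and lf: "locally_finite w" and xy: "x \<noteq> y"
  shows "hit_first w e x y = ennreal (infsum (path_prob w) (HF e x y))"
proof -
  have "{xs \<in> first_passage_paths e {x, y}. last xs = x \<and> x \<noteq> y} = HF e x y"
    unfolding HF_def using xy by simp
  then show ?thesis unfolding hit_first_def using ennreal_infsum[OF wg sHF[OF wg lf]] by simp
qed

lemma return_real:
  assumes wg: "weighted_graph w" and lf: "locally_finite w"
  shows "return_prob w g = ennreal (infsum (path_prob w) (Ret g))"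
  unfolding return_prob_def Ret_def[symmetric] by (rule ennreal_infsum[OF wg sRet[OF wg lf]])

theorem lemma6p5:
  fixes w :: "'a \<Rightarrow> 'a \<Rightarrow> real" and e x y :: 'a
  assumes "weighted_graph w" and "locally_finite w" and "vertex_transitive w"
  shows "(hit_prob w e {x} > hit_prob w e {y} \<longrightarrow> cond_hit_first w e x y > 1/2)
       \<and> (transient w e \<longrightarrow>
            (hit_prob w e {x} > hit_prob w e {y} \<longleftrightarrow> cond_hit_first w e x y > 1/2))"
proof (cases "x = y")
  case True
  have "hit_first w e x y = 0" unfolding hit_first_def using True by simp
  then have "cond_hit_first w e x y = 0" unfolding cond_hit_first_def by simp
  then show ?thesis using True by simp
next
  case False
  note wg = assms(1) and lf = assms(2) and vt = assms(3)
  define a where "a = infsum (path_prob w) (HF e x y)"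
  define b where "b = infsum (path_prob w) (HF e y x)"
  define p where "p = infsum (path_prob w) (first_passage_paths y {x})"
  define Hx where "Hx = infsum (path_prob w) (first_passage_paths e {x})"
  define Hy where "Hy = infsum (path_prob w) (first_passage_paths e {y})"
  have a0: "0 \<le> a" "0 \<le> b" "0 \<le> p" "p \<le> 1" "0 \<le> Hy"
    unfolding a_def b_def p_def Hy_def using pfree_nonneg[OF wg] le1FP[OF wg lf] by auto
  have hx: "Hx = a + b * p" unfolding Hx_def a_def b_def p_def by (rule R1[OF wg lf False])
  have "Hy = b + a * infsum (path_prob w) (first_passage_paths x {y})"
    unfolding Hy_def a_def b_def by (rule R1[OF wg lf False[symmetric]])
  then have hy: "Hy = b + a * p" unfolding p_def using P_sym[OF wg lf vt False] by simp
  have cond: "cond_hit_first w e x y = a / (a + b)"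
    unfolding cond_hit_first_def hit_first_real[OF wg lf False] hit_prob_real[OF wg lf]
      R0[OF wg lf False] a_def[symmetric] b_def[symmetric] using a0 by (simp del: ennreal_plus)
  have cmp: "hit_prob w e {x} > hit_prob w e {y} \<longleftrightarrow> Hx > Hy"
    unfolding hit_prob_real[OF wg lf] Hx_def[symmetric] Hy_def[symmetric] using ennreal_less_iff[OF a0(5)] by simp
  have tr: "transient w e \<Longrightarrow> p < 1"
  proof -
    assume "transient w e"
    then have "ennreal (infsum (path_prob w) (Ret e)) < ennreal 1" unfolding transient_def return_real[OF wg lf] by simp
    then have "infsum (path_prob w) (Ret e) < 1" using pfree_nonneg[OF wg] ennreal_less_iff by blast
    then have "infsum (path_prob w) (Ret y) < 1" using Ret_const[OF wg vt, of y e] by simp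
    then show "p < 1" unfolding p_def by (rule P_lt1[OF wg lf vt False[symmetric]])
  qed
  show ?thesis unfolding cmp cond using main_real[OF a0(1-4) hx hy] tr by blast
qed

end
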